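(* Let $g\ge1$ and $n\ge1$. For any $T_n\in\mathcal T_n$ there exists $\widehat T_n\in\mathcal T_n$ with $\hat w_n(\widehat T_n)>0$ such that $\widehat T_n$ covers $T_n$ and \[ C(T_n)\le C(\widehat T_n)\le (C(T_n)+1)L_{C(T_n),n}-1, \] where $L_{C,n}=\left\lceil\frac{\log n}{\lfloor\log(g+1)\rfloor}\right\rceil+1$ if $C=0$ and $L_{C,n}=\frac{\log\frac{n}{C+1}}{\lfloor\log(g+1)\rfloor}+2$ if $C\ge1$.
   Context: $\log$ is base 2. $\mathcal T_n$ is the set of transition paths $T=(t_1,\ldots,t_C;n)$ with $C\ge0$ and $1<t_1<\cdots<t_C\le n$; $C(T)=C$ is its number of switches. $\widehat T$ covers $T$ if every switch point of $T$ is a switch point of $\widehat T$. Weights: given switch probabilities $p(t|t')\in(0,1)$ for all $1\le t'<t$, let $U_1=1$ and $\Pr(U_t=t\mid U_{t-1}=t')=p(t|t')=1-\Pr(U_t=t'\mid U_{t-1}=t')$; a path $T\in\mathcal T_t$ corresponds to the realization jumping exactly at its switch points and $w_t(T)$ is its probability. Pruning with parameter $g$: write $s=o2^u$ with $o$ odd, $u\ge0$; $h_t(s)=1$ if $s\le t<s+g2^u$ and $0$ otherwise; $\hat p(t|t')=1-h_t(t')(1-p(t|t'))$; $\hat w_t$ is the Markov weight function defined from $\hat p$. *)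

theory Defs
  imports Complex_Main "HOL-Computational_Algebra.Primes"
begin

text \<open>A transition path T = (t_1,...,t_C; n) is represented by its set of switch points
  {t_1,...,t_C}, a subset of {2..n} (i.e. 1 < t_i \<le> n).\<close>
definition paths :: "nat \<Rightarrow> nat set set" where
  "paths n = {S. S \<subseteq> {2..n}}"

definition nsw :: "nat set \<Rightarrow> nat" where
  "nsw S = card S"

definition covers :: "nat set \<Rightarrow> nat set \<Rightarrow> bool" where
  "covers That T \<longleftrightarrow> T \<subseteq> That"

text \<open>Value of the chain U_t along the path S: the last switch point \<le> t (or 1).\<close>
definition last_sw :: "nat set \<Rightarrow> nat \<Rightarrow> nat" where
  "last_sw S t = Max (insert 1 {x \<in> S. x \<le> t})"

text \<open>Markov weight: q t t' = Pr(U_t = t | U_{t-1} = t'); w_t(S) is the probability that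
  the chain jumps exactly at the points of S up to time t.\<close>
definition mweight :: "(nat \<Rightarrow> nat \<Rightarrow> real) \<Rightarrow> nat \<Rightarrow> nat set \<Rightarrow> real" where
  "mweight q t S = (\<Prod>s\<in>{2..t}. if s \<in> S then q s (last_sw S (s - 1))
                                  else 1 - q s (last_sw S (s - 1)))"

definition hprune :: "nat \<Rightarrow> nat \<Rightarrow> nat \<Rightarrow> real" where
  "hprune g t s = (if (s::nat) \<le> t \<and> t < s + g * 2 ^ multiplicity (2::nat) (s::nat) then 1 else 0)"

definition phat :: "nat \<Rightarrow> (nat \<Rightarrow> nat \<Rightarrow> real) \<Rightarrow> nat \<Rightarrow> nat \<Rightarrow> real" where
  "phat g p t t' = 1 - hprune g t t' * (1 - p t t')"

definition Lbound :: "nat \<Rightarrow> nat \<Rightarrow> nat \<Rightarrow> real" where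
  "Lbound g C n = (if C = 0
     then real_of_int \<lceil>log 2 (real n) / real_of_int \<lfloor>log 2 (real g + 1)\<rfloor>\<rceil> + 1
     else log 2 (real n / (real C + 1)) / real_of_int \<lfloor>log 2 (real g + 1)\<rfloor> + 2)"

end

theory Submission
  imports Defs
begin

definition R :: "nat \<Rightarrow> nat \<Rightarrow> nat" where
  "R g x = x + g * 2 ^ multiplicity (2::nat) x"

lemma step_point:
  fixes a k u :: nat
  assumes "0 < a" "1 \<le> k" "u = multiplicity (2::nat) a"
  defines "y \<equiv> (a div 2^(u+k) + 1) * 2^(u+k)"
  shows "a < y" "y - a \<le> (2^k - 1) * 2^u" "u + k \<le> multiplicity (2::nat) y"
proof -
  have d1: "2^u dvd a" using assms multiplicity_dvd by blast
  have nd: "\<not> 2^(u+k) dvd a"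
  proof
    assume "2^(u+k) dvd a"
    then have "u + k \<le> multiplicity 2 a" using multiplicity_geI[of a 2 "u+k"] assms by auto
    then show False using assms by simp
  qed
  have am: "a = (a div 2^(u+k)) * 2^(u+k) + a mod 2^(u+k)" by (rule div_mult_mod_eq[symmetric])
  have ml: "a mod 2^(u+k) < 2^(u+k)" by simp
  have mnz: "a mod 2^(u+k) \<noteq> 0" using nd by (simp add: mod_eq_0_iff_dvd)
  have dm: "2^u dvd a mod 2^(u+k)"
    using d1 by (simp add: dvd_mod le_imp_power_dvd)
  have mge: "2^u \<le> a mod 2^(u+k)" using dm mnz by (simp add: dvd_imp_le)
  have y2: "y = a div 2^(u+k) * 2^(u+k) + 2^(u+k)" by (simp add: y_def)
  have yeq: "y = a + (2^(u+k) - a mod 2^(u+k))"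
    using y2 am ml by linarith
  show "a < y" using yeq ml by linarith
  have "y - a \<le> 2^(u+k) - 2^u" using yeq mge by linarith
  also have "\<dots> = (2^k - 1) * 2^u" by (simp add: power_add diff_mult_distrib2 mult.commute)
  finally show "y - a \<le> (2^k - 1) * 2^u" .
  have "y > 0" using \<open>a < y\<close> by simp
  then show "u + k \<le> multiplicity (2::nat) y"
    by (intro multiplicity_geI) (auto simp: y_def)
qed

lemma Max_cover:
  fixes A B :: "nat set"
  assumes "finite A" "B \<subseteq> A" "B \<noteq> {}" "\<forall>x\<in>A. \<exists>y\<in>B. x \<le> y"
  shows "Max A = Max B"
proof (rule antisym)
  have fB: "finite B" using assms finite_subset by blast
  have "A \<noteq> {}" using assms by auto
  then have "Max A \<in> A" using assms Max_in by blast
  then obtain y where "y \<in> B" "Max A \<le> y" using assms by blast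
  then show "Max A \<le> Max B" using fB Max_ge[OF fB] order_trans by blast
  show "Max B \<le> Max A" using assms by (intro Max_mono) auto
qed

lemma seg:
  fixes g k :: nat
  assumes g: "1 \<le> g" and k: "1 \<le> k" "2^k \<le> g + 1"
  shows "0 < a \<Longrightarrow> a < b \<Longrightarrow> \<exists>P. P \<subseteq> {a<..<b} \<and>
     (\<forall>s. a < s \<longrightarrow> s < b \<longrightarrow> s \<notin> P \<longrightarrow> s < R g (Max (insert a {x\<in>P. x \<le> s-1}))) \<and>
     (P \<noteq> {} \<longrightarrow> g * 2^(multiplicity (2::nat) a + (card P - 1)*k) < b - a)"
proof (induction "b - a" arbitrary: a rule: less_induct)
  case (less a)
  show ?case
  proof (cases "b \<le> R g a")
    case True
    then show ?thesis using less.prems by (intro exI[of _ "{}"]) auto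
  next
    case False
    define u where "u = multiplicity (2::nat) a"
    define y where "y = (a div 2^(u+k) + 1) * 2^(u+k)"
    have y1: "a < y" and y2: "y - a \<le> (2^k - 1) * 2^u" and y3: "u + k \<le> multiplicity (2::nat) y"
      using step_point[OF less.prems(1) k(1) u_def] unfolding y_def by auto
    have "(2^k - 1) * 2^u \<le> g * 2^u" using k by simp
    then have yR: "y \<le> R g a" using y1 y2 unfolding R_def u_def by linarith
    then have yb: "y < b" using False by simp
    have hh: "b - y < b - a" "0 < y" "y < b" using y1 yb by auto
    obtain P' where P'1: "P' \<subseteq> {y<..<b}"
      and P'2: "\<forall>s. y < s \<longrightarrow> s < b \<longrightarrow> s \<notin> P' \<longrightarrow> s < R g (Max (insert y {x\<in>P'. x \<le> s-1}))"
      and P'3: "P' \<noteq> {} \<longrightarrow> g * 2^(multiplicity (2::nat) y + (card P' - 1)*k) < b - y"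
      using less.hyps[OF hh(1) hh(2) hh(3)] by blast
    have fP': "finite P'" using P'1 finite_subset by blast
    have yP': "y \<notin> P'" using P'1 by auto
    define P where "P = insert y P'"
    have cP: "card P = Suc (card P')" using fP' yP' P_def by simp
    show ?thesis
    proof (intro exI[of _ P] conjI allI impI)
      show "P \<subseteq> {a<..<b}" using P'1 y1 yb P_def by auto
    next
      fix s assume s: "a < s" "s < b" "s \<notin> P"
      show "s < R g (Max (insert a {x\<in>P. x \<le> s-1}))"
      proof (cases "s < y")
        case True
        have "\<forall>x\<in>P. y \<le> x" using P'1 P_def by auto
        then have e0: "{x\<in>P. x \<le> s-1} = {}" using True by fastforce
        have "Max (insert a {x\<in>P. x \<le> s-1}) = a" unfolding e0 by simp
        then show ?thesis using True yR by simp
      next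
        case False
        then have sy: "y < s" using s P_def by (cases "s = y") auto
        have e: "{x\<in>P. x \<le> s-1} = insert y {x\<in>P'. x \<le> s-1}" using sy P_def by auto
        have "Max (insert a (insert y {x\<in>P'. x \<le> s-1})) = Max (insert y {x\<in>P'. x \<le> s-1})"
          using fP' y1 by (intro Max_cover) auto
        then show ?thesis using P'2 s sy e P_def by auto
      qed
    next
      assume "P \<noteq> {}"
      show "g * 2^(multiplicity (2::nat) a + (card P - 1)*k) < b - a"
      proof (cases "P' = {}")
        case True
        then have "card P = 1" using cP by simp
        then show ?thesis using False unfolding R_def by simp
      next
        case True2: False
        have cpos: "card P' \<ge> 1" using True2 fP' by (simp add: Suc_leI card_gt_0_iff)
        have "multiplicity (2::nat) a + (card P - 1)*k \<le> multiplicity (2::nat) y + (card P' - 1)*k"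
        proof -
          have "(card P - 1)*k = k + (card P' - 1)*k" using cP cpos by (cases "card P'") auto
          then show ?thesis using y3 u_def by linarith
        qed
        then have "g * 2^(multiplicity (2::nat) a + (card P - 1)*k) \<le> g * 2^(multiplicity (2::nat) y + (card P' - 1)*k)"
          by (intro mult_le_mono2 power_increasing) auto
        also have "\<dots> < b - y" using P'3 True2 by simp
        also have "\<dots> \<le> b - a" using y1 by simp
        finally show ?thesis .
      qed
    qed
  qed
qed


definition good :: "nat \<Rightarrow> nat set \<Rightarrow> nat \<Rightarrow> bool" where
  "good g S b \<longleftrightarrow> (\<forall>s. 2 \<le> s \<longrightarrow> s < b \<longrightarrow> s \<notin> S \<longrightarrow> s < R g (last_sw S (s-1)))"

lemma main:
  fixes g k :: nat
  assumes g: "1 \<le> g" and k: "1 \<le> k" "2^k \<le> g + 1"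
  shows "T \<subseteq> {2..<b} \<Longrightarrow> 2 \<le> b \<Longrightarrow> \<exists>S ps. T \<subseteq> S \<and> S \<subseteq> {2..<b} \<and> good g S b \<and>
     length ps = card T + 1 \<and> sum_list (map fst ps) = b - 1 \<and>
     (\<forall>(d,j)\<in>set ps. 1 \<le> d \<and> (j = 0 \<or> 2^((j-1)*k) < d)) \<and>
     card S \<le> card T + sum_list (map snd ps)"
proof (induction "card T" arbitrary: T b)
  case 0
  have fT: "finite T" using 0 finite_subset by blast
  then have T0: "T = {}" using 0 by simp
  obtain P where P1: "P \<subseteq> {1<..<b}"
    and P2: "\<forall>s. 1 < s \<longrightarrow> s < b \<longrightarrow> s \<notin> P \<longrightarrow> s < R g (Max (insert 1 {x\<in>P. x \<le> s-1}))"
    and P3: "P \<noteq> {} \<longrightarrow> g * 2^(multiplicity (2::nat) (1::nat) + (card P - 1)*k) < b - 1"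
    using seg[OF g k, of 1 b] 0 by auto
  have fP: "finite P" using P1 finite_subset by blast
  show ?case
  proof (intro exI[of _ P] exI[of _ "[(b-1, card P)]"] conjI)
    show "T \<subseteq> P" using T0 by simp
    show "P \<subseteq> {2..<b}" using P1 by auto
    show "good g P b" unfolding good_def last_sw_def using P2 by auto
    show "length [(b-1, card P)] = card T + 1" using T0 by simp
    show "sum_list (map fst [(b-1, card P)]) = b - 1" by simp
    have "card P = 0 \<or> 2^((card P - 1)*k) < b - 1"
    proof (cases "P = {}")
      case False
      then have "g * 2^((card P - 1)*k) < b - 1" using P3 by simp
      moreover have "2^((card P - 1)*k) \<le> g * 2^((card P - 1)*k)" using g by simp
      ultimately show ?thesis by linarith
    qed simp
    then show "\<forall>(d,j)\<in>set [(b-1, card P)]. 1 \<le> d \<and> (j = 0 \<or> 2^((j-1)*k) < d)"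
      using 0 by auto
    show "card P \<le> card T + sum_list (map snd [(b-1, card P)])" by simp
  qed
next
  case (Suc c T b)
  have fT: "finite T" using Suc.prems finite_subset by blast
  have Tne: "T \<noteq> {}" using Suc.hyps(2) by auto
  define m where "m = Max T"
  have mT: "m \<in> T" using fT Tne m_def by simp
  have mb: "2 \<le> m" "m < b" using mT Suc.prems by auto
  define T' where "T' = T - {m}"
  have cT': "c = card T'" using Suc.hyps(2) mT fT T'_def by simp
  have T'sub: "T' \<subseteq> {2..<m}"
  proof
    fix x assume "x \<in> T'"
    then have "x \<in> T" "x \<noteq> m" using T'_def by auto
    moreover have "x \<le> m" using \<open>x \<in> T\<close> fT m_def by simp
    ultimately show "x \<in> {2..<m}" using Suc.prems by auto
  qed
  obtain S' ps' where S'1: "T' \<subseteq> S'" and S'2: "S' \<subseteq> {2..<m}" and S'3: "good g S' m"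
    and S'4: "length ps' = card T' + 1" and S'5: "sum_list (map fst ps') = m - 1"
    and S'6: "\<forall>(d,j)\<in>set ps'. 1 \<le> d \<and> (j = 0 \<or> 2^((j-1)*k) < d)"
    and S'7: "card S' \<le> card T' + sum_list (map snd ps')"
    using Suc.hyps(1)[OF cT' T'sub mb(1)] by blast
  have m0: "0 < m" using mb by simp
  obtain P where P1: "P \<subseteq> {m<..<b}"
    and P2: "\<forall>s. m < s \<longrightarrow> s < b \<longrightarrow> s \<notin> P \<longrightarrow> s < R g (Max (insert m {x\<in>P. x \<le> s-1}))"
    and P3: "P \<noteq> {} \<longrightarrow> g * 2^(multiplicity (2::nat) m + (card P - 1)*k) < b - m"
    using seg[OF g k m0 mb(2)] by blast
  have fP: "finite P" using P1 finite_subset by blast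
  have fS': "finite S'" using S'2 finite_subset by blast
  define S where "S = S' \<union> {m} \<union> P"
  define ps where "ps = (b - m, card P) # ps'"
  show ?case
  proof (intro exI[of _ S] exI[of _ ps] conjI)
    show "T \<subseteq> S" using S'1 T'_def S_def by auto
    show "S \<subseteq> {2..<b}" using S'2 P1 mb S_def by auto
    show "length ps = card T + 1" using ps_def S'4 cT' Suc.hyps(2) by simp
    show "sum_list (map fst ps) = b - 1" using ps_def S'5 mb by simp
    have "card P = 0 \<or> 2^((card P - 1)*k) < b - m"
    proof (cases "P = {}")
      case False
      then have "g * 2^(multiplicity (2::nat) m + (card P - 1)*k) < b - m" using P3 by simp
      moreover have "2^((card P - 1)*k) \<le> g * 2^(multiplicity (2::nat) m + (card P - 1)*k)"
      proof -
        have "(2::nat)^((card P - 1)*k) \<le> 2^(multiplicity (2::nat) m + (card P - 1)*k)"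
          by (intro power_increasing) auto
        also have "\<dots> \<le> g * 2^(multiplicity (2::nat) m + (card P - 1)*k)" using g by simp
        finally show ?thesis .
      qed
      ultimately show ?thesis by linarith
    qed simp
    then show "\<forall>(d,j)\<in>set ps. 1 \<le> d \<and> (j = 0 \<or> 2^((j-1)*k) < d)"
      using S'6 ps_def mb by auto
    have "card S \<le> card S' + card {m} + card P" unfolding S_def
      by (metis card_Un_le add_le_mono1 order_trans)
    then show "card S \<le> card T + sum_list (map snd ps)"
      using S'7 ps_def cT' Suc.hyps(2) by simp
    show "good g S b" unfolding good_def
    proof (intro allI impI)
      fix s assume s: "2 \<le> s" "s < b" "s \<notin> S"
      have sm: "s \<noteq> m" using s S_def by auto
      show "s < R g (last_sw S (s-1))"
      proof (cases "s < m")
        case True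
        have "\<forall>x\<in>P. m < x" using P1 by auto
        then have "{x\<in>S. x \<le> s-1} = {x\<in>S'. x \<le> s-1}" using True S_def by fastforce
        then have "last_sw S (s-1) = last_sw S' (s-1)" unfolding last_sw_def by simp
        moreover have "s \<notin> S'" using s S_def by auto
        ultimately show ?thesis using S'3 s True unfolding good_def by auto
      next
        case False
        then have ms: "m < s" using sm by simp
        have sP: "s \<notin> P" using s S_def by auto
        have "last_sw S (s-1) = Max (insert m {x\<in>P. x \<le> s-1})"
          unfolding last_sw_def
        proof (rule Max_cover)
          show "finite (insert 1 {x \<in> S. x \<le> s - 1})" using fS' fP S_def by auto
          show "insert m {x \<in> P. x \<le> s - 1} \<subseteq> insert 1 {x \<in> S. x \<le> s - 1}"
            using ms S_def by auto
          show "insert m {x \<in> P. x \<le> s - 1} \<noteq> {}" by simp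
          show "\<forall>x\<in>insert 1 {x \<in> S. x \<le> s - 1}. \<exists>y\<in>insert m {x \<in> P. x \<le> s - 1}. x \<le> y"
            using S'2 mb S_def by fastforce
        qed
        then show ?thesis using P2 ms s sP by auto
      qed
    qed
  qed
qed


lemma last_sw_bounds:
  assumes "2 \<le> s"
  shows "1 \<le> last_sw S (s-1)" "last_sw S (s-1) \<le> s - 1"
proof -
  have f: "finite (insert 1 {x\<in>S. x \<le> s-1})"
    by (rule finite_subset[of _ "{..s-1}"]) (use assms in auto)
  show "1 \<le> last_sw S (s-1)" unfolding last_sw_def using f by simp
  show "last_sw S (s-1) \<le> s - 1" unfolding last_sw_def using f assms by simp
qed

lemma weight_pos:
  assumes S: "S \<subseteq> {2..n}" and gd: "good g S (n+1)"
    and p: "\<And>t t'. 1 \<le> t' \<Longrightarrow> t' < t \<Longrightarrow> 0 < p t t' \<and> p t t' < 1"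
  shows "mweight (phat g p) n S > 0"
  unfolding mweight_def
proof (rule prod_pos)
  fix s assume s: "s \<in> {2..n}"
  define t' where "t' = last_sw S (s-1)"
  have t1: "1 \<le> t'" "t' < s" using last_sw_bounds[of s S] s t'_def by auto
  have pp: "0 < p s t'" "p s t' < 1" using p[OF t1] by auto
  have h01: "hprune g s t' = 0 \<or> hprune g s t' = 1" unfolding hprune_def by simp
  show "0 < (if s \<in> S then phat g p s (last_sw S (s - 1)) else 1 - phat g p s (last_sw S (s - 1)))"
  proof (cases "s \<in> S")
    case True
    then show ?thesis using h01 pp unfolding phat_def t'_def[symmetric] by auto
  next
    case False
    then have "s < R g t'" using gd s unfolding good_def t'_def by auto
    then have "hprune g s t' = 1" using t1 unfolding hprune_def R_def by simp
    then show ?thesis using False pp unfolding phat_def t'_def[symmetric] by auto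
  qed
qed

lemma jbound:
  fixes k d j :: nat
  assumes "1 \<le> k" "1 \<le> j" "2^((j-1)*k) < d"
  shows "real (j - 1) < log 2 (real d) / real k"
proof -
  have "(2::real)^((j-1)*k) < real d" using assms(3)
    by (metis of_nat_less_iff of_nat_numeral of_nat_power)
  then have "real ((j-1)*k) < log 2 (real d)" by (intro less_log_of_power) auto
  then have "real (j-1) * real k < log 2 (real d)" by simp
  then show ?thesis using assms(1) by (simp add: pos_less_divide_eq)
qed

lemma jbound2:
  fixes k d j :: nat
  assumes "1 \<le> k" "1 \<le> d" "j = 0 \<or> 2^((j-1)*k) < d"
  shows "real j \<le> log 2 (real d) / real k + 1"
proof (cases "j = 0")
  case True
  have "0 \<le> log 2 (real d)" using assms by simp
  then show ?thesis using True assms by simp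
next
  case False
  then have "real (j - 1) < log 2 (real d) / real k" using jbound assms by auto
  then show ?thesis using False by (simp add: of_nat_diff)
qed

lemma list_j:
  fixes k :: nat and ps :: "(nat \<times> nat) list"
  assumes "1 \<le> k" "\<forall>(d,j)\<in>set ps. 1 \<le> d \<and> (j = 0 \<or> 2^((j-1)*k) < d)"
  shows "real (sum_list (map snd ps)) \<le> sum_list (map (\<lambda>x. ln (real (fst x))) ps) / (ln 2 * real k) + length ps"
  using assms(2)
proof (induction ps)
  case Nil
  then show ?case by simp
next
  case (Cons a ps)
  obtain d j where a: "a = (d, j)" by fastforce
  have "real j \<le> log 2 (real d) / real k + 1" using jbound2 assms(1) Cons.prems a by auto
  also have "log 2 (real d) / real k = ln (real d) / (ln 2 * real k)" by (simp add: log_def)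
  finally have "real j \<le> ln (real d) / (ln 2 * real k) + 1" .
  then show ?case using Cons a by (simp add: add_divide_distrib)
qed

lemma sum_ln:
  fixes xs :: "real list"
  assumes "xs \<noteq> []" "\<forall>x\<in>set xs. 0 < x"
  shows "sum_list (map ln xs) \<le> length xs * ln (sum_list xs / length xs)"
proof -
  define mu where "mu = sum_list xs / length xs"
  obtain a ys where xa: "xs = a # ys" using assms(1) by (cases xs) auto
  have "0 \<le> sum_list ys" using assms xa by (intro sum_list_nonneg) auto
  then have sp: "0 < sum_list xs" using assms xa by simp
  then have mu: "0 < mu" using assms mu_def by simp
  have aff: "\<And>c e::real. sum_list (map (\<lambda>x. c + e * x) xs) = real (length xs) * c + e * sum_list xs"
    by (induction xs) (auto simp: algebra_simps)
  have "sum_list (map ln xs) \<le> sum_list (map (\<lambda>x. (ln mu - 1) + (1/mu) * x) xs)"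
  proof (rule sum_list_mono)
    fix x assume "x \<in> set xs"
    then have x: "0 < x" using assms by auto
    have "ln (x / mu) \<le> x / mu - 1" using x mu by (intro ln_le_minus_one) simp
    then show "ln x \<le> (ln mu - 1) + (1/mu) * x" using x mu by (simp add: ln_div)
  qed
  also have "\<dots> = length xs * (ln mu - 1) + (1/mu) * sum_list xs" by (rule aff)
  also have "(1/mu) * sum_list xs = length xs" using mu_def sp assms by simp
  finally show ?thesis unfolding mu_def by (simp add: algebra_simps)
qed


theorem lemma4:
  fixes g n :: nat and p :: "nat \<Rightarrow> nat \<Rightarrow> real" and T :: "nat set"
  assumes "g \<ge> 1" and "n \<ge> 1"
    and "\<And>t t'. 1 \<le> t' \<Longrightarrow> t' < t \<Longrightarrow> 0 < p t t' \<and> p t t' < 1"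
    and "T \<in> paths n"
  shows "\<exists>That \<in> paths n. mweight (phat g p) n That > 0 \<and> covers That T \<and>
           nsw T \<le> nsw That \<and>
           real (nsw That) \<le> (real (nsw T) + 1) * Lbound g (nsw T) n - 1"
proof -
  define fl where "fl = \<lfloor>log 2 (real g + 1)\<rfloor>"
  define k where "k = nat fl"
  have "log 2 2 \<le> log 2 (real g + 1)" using assms(1) by (intro log_mono) auto
  then have lg: "1 \<le> log 2 (real g + 1)" by simp
  then have fl1: "1 \<le> fl" unfolding fl_def by (simp add: le_floor_iff)
  have kr: "real k = real_of_int fl" using fl1 k_def by simp
  have k1: "1 \<le> k" using fl1 k_def by simp
  have "real k \<le> log 2 (real g + 1)" using kr fl_def by simp
  then have "2 powr real k \<le> 2 powr log 2 (real g + 1)" by (intro powr_mono) auto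
  also have "\<dots> = real g + 1" by simp
  finally have "(2::real) ^ k \<le> real g + 1" by (simp add: powr_realpow)
  then have k2: "2^k \<le> g + 1"
  proof -
    have "real (2^k) \<le> real (g + 1)" using \<open>(2::real) ^ k \<le> real g + 1\<close> by simp
    then show ?thesis by (simp only: of_nat_le_iff)
  qed
  have Tsub: "T \<subseteq> {2..<n+1}" using assms(4) unfolding paths_def by auto
  obtain S ps where S1: "T \<subseteq> S" and S2: "S \<subseteq> {2..<n+1}" and S3: "good g S (n+1)"
    and S4: "length ps = card T + 1" and S5: "sum_list (map fst ps) = n + 1 - 1"
    and S6: "\<forall>(d,j)\<in>set ps. 1 \<le> d \<and> (j = 0 \<or> 2^((j-1)*k) < d)"
    and S7: "card S \<le> card T + sum_list (map snd ps)"
    using main[OF assms(1) k1 k2 Tsub] assms(2) by auto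
  have S2': "S \<subseteq> {2..n}" using S2 by auto
  have fS: "finite S" using S2' finite_subset by blast
  define C where "C = card T"
  have bound: "real (card S) \<le> (real C + 1) * Lbound g C n - 1"
  proof (cases "C = 0")
    case True
    then obtain d j where ps: "ps = [(d, j)]" using S4 C_def
      by (cases ps) (auto simp: length_Suc_conv)
    have dn: "d = n" using S5 ps by simp
    have cj: "card S \<le> j" using S7 ps True C_def by simp
    define c where "c = \<lceil>log 2 (real n) / real_of_int fl\<rceil>"
    have "real j \<le> real_of_int c"
    proof (cases "j = 0")
      case True
      have "0 \<le> log 2 (real n) / real_of_int fl" using assms(2) fl1 by simp
      then have "0 \<le> c" unfolding c_def by simp
      then show ?thesis using True by simp
    next
      case False
      have "real (j - 1) < log 2 (real n) / real k"
        using jbound[OF k1, of j n] False S6 ps dn by auto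
      also have "\<dots> \<le> real_of_int c" unfolding c_def kr by simp
      finally have "int (j - 1) < c" by linarith
      then have "int j \<le> c" using False by linarith
      then show ?thesis by linarith
    qed
    moreover have "real (card S) \<le> real j" using cj by simp
    ultimately show ?thesis using True unfolding Lbound_def c_def fl_def[symmetric] by simp
  next
    case False
    define xs where "xs = map (\<lambda>x. real (fst x)) ps"
    have xs1: "xs \<noteq> []" using S4 xs_def by auto
    have xs2: "\<forall>x\<in>set xs. 0 < x" using S6 xs_def by auto
    have sx: "sum_list xs = real (sum_list (map fst ps))" unfolding xs_def by (induction ps) auto
    have lx: "length xs = C + 1" using S4 xs_def C_def by simp
    have mx: "map ln xs = map (\<lambda>x. ln (real (fst x))) ps" unfolding xs_def by simp
    have Lb: "sum_list (map (\<lambda>x. ln (real (fst x))) ps) \<le> (real C + 1) * ln (real n / (real C + 1))"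
      using sum_ln[OF xs1 xs2] unfolding mx sx lx using S5 by (simp add: add.commute)
    have pos: "0 < ln 2 * real k" using k1 by simp
    have "real (card S) \<le> real C + real (sum_list (map snd ps))" using S7 C_def by simp
    also have "real (sum_list (map snd ps)) \<le> sum_list (map (\<lambda>x. ln (real (fst x))) ps) / (ln 2 * real k) + length ps"
      by (rule list_j[OF k1 S6])
    also have "sum_list (map (\<lambda>x. ln (real (fst x))) ps) / (ln 2 * real k) \<le> (real C + 1) * ln (real n / (real C + 1)) / (ln 2 * real k)"
      using Lb pos by (intro divide_right_mono) auto
    also have "(real C + 1) * ln (real n / (real C + 1)) / (ln 2 * real k) = (real C + 1) * (log 2 (real n / (real C + 1)) / real k)"
      by (simp add: log_def)
    finally have "real (card S) \<le> real C + ((real C + 1) * (log 2 (real n / (real C + 1)) / real k) + real (C + 1))"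
      using S4 C_def by simp
    then show ?thesis using False unfolding Lbound_def kr[symmetric] fl_def[symmetric] by (simp add: algebra_simps)
  qed
  show ?thesis
  proof (intro bexI[of _ S] conjI)
    show "S \<in> paths n" using S2' unfolding paths_def by simp
    show "mweight (phat g p) n S > 0" using weight_pos[OF S2' S3 assms(3)] by simp
    show "covers S T" using S1 unfolding covers_def by simp
    show "nsw T \<le> nsw S" using S1 fS unfolding nsw_def by (simp add: card_mono)
    show "real (nsw S) \<le> (real (nsw T) + 1) * Lbound g (nsw T) n - 1" using bound C_def unfolding nsw_def by simp
  qed
qed

end
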